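(* Let $N\ge2$, $T=\{x\in\mathbb{R}^N:1<|x|<2\}$, $2<p<2^*$ ($2^*=\frac{2N}{N-2}$ if $N\ge3$, $+\infty$ if $N=2$), and for $\lambda>0$ let $u_\lambda$ be the unique positive solution in $H^1_{0,rad}(T)$ of $-\Delta u+\lambda u=u^{p-1}$ in $T$, $u=0$ on $\partial T$. Then $$0<\liminf_{\lambda\to+\infty}\frac{\lambda}{\|u_\lambda\|_{L^\infty}^{p-2}}\le\limsup_{\lambda\to+\infty}\frac{\lambda}{\|u_\lambda\|_{L^\infty}^{p-2}}\le 1.$$ *)

theory Defs
  imports "HOL-Analysis.Analysis"
begin

definition annulus :: "'a::euclidean_space set" where
  "annulus = {x. 1 < norm x \<and> norm x < 2}"

definition C2_on :: "'a::euclidean_space set \<Rightarrow> ('a \<Rightarrow> real) \<Rightarrow> bool" where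
  "C2_on S f \<longleftrightarrow> (\<exists>(f' :: 'a \<Rightarrow> 'a \<Rightarrow>\<^sub>L real) (f'' :: 'a \<Rightarrow> 'a \<Rightarrow>\<^sub>L ('a \<Rightarrow>\<^sub>L real)).
      (\<forall>x\<in>S. (f has_derivative blinfun_apply (f' x)) (at x)) \<and>
      (\<forall>x\<in>S. (f' has_derivative blinfun_apply (f'' x)) (at x)) \<and>
      continuous_on S f'')"

definition laplacian :: "('a::euclidean_space \<Rightarrow> real) \<Rightarrow> 'a \<Rightarrow> real" where
  "laplacian f x = (\<Sum>i\<in>Basis. deriv (deriv (\<lambda>t. f (x + t *\<^sub>R i))) 0)"

definition pos_rad_sol :: "real \<Rightarrow> real \<Rightarrow> ('a::euclidean_space \<Rightarrow> real) \<Rightarrow> bool" where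
  "pos_rad_sol p lam u \<longleftrightarrow>
     C2_on annulus u \<and>
     continuous_on (closure annulus) u \<and>
     (\<forall>x. norm x = 1 \<or> norm x = 2 \<longrightarrow> u x = 0) \<and>
     (\<forall>x\<in>annulus. u x > 0) \<and>
     (\<forall>x y. norm x = norm y \<longrightarrow> u x = u y) \<and>
     (\<forall>x\<in>annulus. - laplacian u x + lam * u x = u x powr (p - 1))"

text \<open>L^infinity norm on T (u is continuous, so the essential sup is the sup).\<close>
definition Linf_norm :: "('a::euclidean_space \<Rightarrow> real) \<Rightarrow> real" where
  "Linf_norm u = Sup ((\<lambda>x. \<bar>u x\<bar>) ` annulus)"

end

theory Submission
  imports Defs
begin


lemma escape:
  fixes v w :: "real \<Rightarrow> real" and r0 b M \<theta> \<alpha> \<kappa> :: real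
  assumes rb: "r0 < b" and M: "0 < M" and th: "0 < \<theta>" "\<theta> < 1" and al: "0 < \<alpha>" and ka: "0 < \<kappa>"
    and cont: "continuous_on {r0..b} v" and vb: "v b = 0"
    and pos: "\<forall>r\<in>{r0..<b}. 0 < v r" and v0: "v r0 = M"
    and der: "\<forall>r\<in>{r0..<b}. (v has_real_derivative w r) (at r)"
    and wc: "\<forall>r\<in>{r0..<b}. isCont w r"
    and P1: "\<forall>r\<in>{r0..<b}. (\<forall>s\<in>{r0..r}. \<theta>*M \<le> v s) \<longrightarrow> w r \<le> -\<alpha>*(r - r0)"
    and P2: "\<forall>r\<in>{r0..<b}. v r \<le> \<theta>*M \<longrightarrow> \<kappa>^2 \<le> (w r)^2"
  shows "b - r0 \<le> sqrt (2*M/\<alpha>) + 2*M/\<kappa>"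
proof -
  define S where "S = {r0..b} \<inter> v -` {..\<theta>*M}"
  have Scl: "closed S" unfolding S_def by (rule continuous_closed_preimage[OF cont]) auto
  have bS: "b \<in> S" using rb vb M th by (auto simp: S_def)
  have Sbd: "bdd_below S" unfolding S_def by (rule bdd_belowI[of _ r0]) auto
  define r1 where "r1 = Inf S"
  have r1S: "r1 \<in> S" unfolding r1_def using closed_contains_Inf[OF _ Sbd Scl] bS by blast
  have r1b: "r1 \<le> b" unfolding r1_def by (rule cInf_lower[OF bS Sbd])
  have r01: "r0 \<le> r1" using r1S by (auto simp: S_def)
  have below: "\<theta>*M < v r" if "r0 \<le> r" "r < r1" for r
  proof (rule ccontr)
    assume "\<not> ?thesis"
    then have "r \<in> S" using that r1b by (auto simp: S_def)
    then have "r1 \<le> r" unfolding r1_def by (rule cInf_lower[OF _ Sbd])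
    then show False using that by simp
  qed
  have vr1: "v r1 \<le> \<theta>*M" using r1S by (auto simp: S_def)
  have vr1eq: "v r1 = \<theta>*M"
  proof -
    have "continuous_on {r0..r1} v" by (rule continuous_on_subset[OF cont]) (use r1b in auto)
    from IVT2'[of v r1 "\<theta>*M" r0, OF vr1 _ r01 this] v0 th M
    obtain c where c: "r0 \<le> c" "c \<le> r1" "v c = \<theta>*M" by auto
    then have "c \<in> S" using r1b by (auto simp: S_def)
    then have "r1 \<le> c" unfolding r1_def by (rule cInf_lower[OF _ Sbd])
    with c show ?thesis by simp
  qed
  have r01s: "r0 < r1" using r01 vr1eq v0 th M by (cases "r0 = r1") (auto simp: mult_less_cancel_right1)
  have vr1nn: "0 \<le> v r1"
  proof (cases "r1 = b")
    case True thus ?thesis using vb by simp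
  next
    case False
    then have "r1 \<in> {r0..<b}" using r01 r1b by auto
    then show ?thesis using pos by (meson less_imp_le)
  qed
  have ph1: "r1 - r0 \<le> sqrt (2*M/\<alpha>)"
  proof -
    define \<phi> where "\<phi> = (\<lambda>r. v r + \<alpha>/2 * (r - r0)^2)"
    have "\<phi> r1 \<le> \<phi> r0"
    proof (rule DERIV_nonpos_imp_decreasing_open[OF r01])
      fix x assume x: "r0 < x" "x < r1"
      have d: "(v has_real_derivative w x) (at x)" using der x r1b by auto
      have "(\<phi> has_real_derivative (w x + \<alpha>/2 * (2 * (x - r0)))) (at x)"
        unfolding \<phi>_def by (auto intro!: derivative_eq_intros d)
      moreover have "w x \<le> -\<alpha>*(x - r0)"
      proof -
        have "x \<in> {r0..<b}" using x r1b by auto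
        moreover have "\<forall>s\<in>{r0..x}. \<theta>*M \<le> v s" using below x by (auto intro: less_imp_le)
        ultimately show ?thesis using P1 by auto
      qed
      moreover have "w x + \<alpha>/2 * (2 * (x - r0)) = w x + \<alpha> * (x - r0)" by simp
      moreover have "-\<alpha> * (x - r0) = - (\<alpha> * (x - r0))" by simp
      ultimately have "(\<phi> has_real_derivative (w x + \<alpha>/2 * (2 * (x - r0)))) (at x) \<and> w x + \<alpha>/2 * (2 * (x - r0)) \<le> 0"
        by linarith
      then show "\<exists>y. (\<phi> has_real_derivative y) (at x) \<and> y \<le> 0" by blast
    next
      show "continuous_on {r0..r1} \<phi>" unfolding \<phi>_def
        using continuous_on_subset[OF cont, of "{r0..r1}"] r1b by (auto intro!: continuous_intros)
    qed
    then have "\<alpha>/2 * (r1 - r0)^2 \<le> M" using vr1nn v0 by (simp add: \<phi>_def)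
    then have "(r1 - r0)^2 \<le> 2*M/\<alpha>" using al by (simp add: field_simps)
    then show ?thesis using r01 by (metis real_le_rsqrt)
  qed
  have ph2: "b - r1 \<le> 2*M/\<kappa>"
  proof (cases "r1 = b")
    case True then show ?thesis using M ka by simp
  next
    case False
    then have r1bs: "r1 < b" using r1b by simp
    have wr1: "w r1 \<le> -\<kappa>"
    proof -
      have "\<forall>s\<in>{r0..r1}. \<theta>*M \<le> v s"
      proof
        fix s assume "s \<in> {r0..r1}"
        then show "\<theta>*M \<le> v s" using below[of s] vr1eq by (cases "s = r1") auto
      qed
      moreover have "r1 \<in> {r0..<b}" using r1bs r01 by auto
      ultimately have "w r1 \<le> -\<alpha>*(r1 - r0)" using P1 by blast
      moreover have "0 < \<alpha>*(r1 - r0)" using al r01s by simp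
      moreover have "-\<alpha>*(r1 - r0) = - (\<alpha>*(r1 - r0))" by simp
      ultimately have wn: "w r1 < 0" by linarith
      have "\<kappa>^2 \<le> (w r1)^2" using P2 r1bs r01 vr1 by auto
      then have k2: "\<kappa>^2 \<le> (- w r1)^2" by simp
      have "\<kappa> \<le> - w r1" using power2_le_imp_le[OF k2] wn by linarith
      then show ?thesis by simp
    qed
    have wneg: "w t < -\<kappa>/2" if t: "r1 \<le> t" "t < b" for t
    proof (rule ccontr)
      assume nt: "\<not> w t < -\<kappa>/2"
      have wcont: "continuous_on {r1..t} w"
        using wc t r01 by (intro continuous_at_imp_continuous_on) auto
      define Z where "Z = {r1..t} \<inter> w -` {-\<kappa>/2..}"
      have Zcl: "closed Z" unfolding Z_def by (rule continuous_closed_preimage[OF wcont]) auto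
      have tZ: "t \<in> Z" using nt t by (auto simp: Z_def)
      have Zbd: "bdd_below Z" unfolding Z_def by (rule bdd_belowI[of _ r1]) auto
      define s2 where "s2 = Inf Z"
      have s2Z: "s2 \<in> Z" unfolding s2_def using closed_contains_Inf[OF _ Zbd Zcl] tZ by blast
      have s2r: "r1 \<le> s2" "s2 \<le> t" "-\<kappa>/2 \<le> w s2" using s2Z by (auto simp: Z_def)
      have lo: "w r < -\<kappa>/2" if "r1 \<le> r" "r < s2" for r
      proof (rule ccontr)
        assume "\<not> ?thesis"
        then have "r \<in> Z" using that s2r by (auto simp: Z_def)
        then have "s2 \<le> r" unfolding s2_def by (rule cInf_lower[OF _ Zbd])
        then show False using that by simp
      qed
      have "v s2 \<le> v r1"
      proof (rule DERIV_nonpos_imp_decreasing_open[OF s2r(1)])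
        fix x assume x: "r1 < x" "x < s2"
        then have "(v has_real_derivative w x) (at x)" using der r01 s2r t by auto
        moreover have "w x \<le> 0" using lo[of x] x ka by auto
        ultimately show "\<exists>y. (v has_real_derivative y) (at x) \<and> y \<le> 0" by blast
      next
        show "continuous_on {r1..s2} v" using continuous_on_subset[OF cont] r01 s2r t by auto
      qed
      then have "\<kappa>^2 \<le> (w s2)^2" using P2 s2r t r01 vr1 by auto
      then have "\<kappa>^2 \<le> \<bar>w s2\<bar>^2" by simp
      then have "\<kappa> \<le> \<bar>w s2\<bar>" using power2_le_imp_le[OF _ abs_ge_zero] by blast
      then have ws2: "\<kappa> \<le> w s2" using s2r(3) ka by linarith
      have "continuous_on {r1..s2} w" using continuous_on_subset[OF wcont] s2r by auto
      from IVT'[of w r1 "-\<kappa>/2" s2, OF _ _ s2r(1) this] wr1 ws2 ka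
      obtain c where c: "r1 \<le> c" "c \<le> s2" "w c = -\<kappa>/2" by auto
      then have "c \<in> Z" using s2r by (auto simp: Z_def)
      then have "s2 \<le> c" unfolding s2_def by (rule cInf_lower[OF _ Zbd])
      with c ws2 ka show False by simp
    qed
    define \<psi> where "\<psi> = (\<lambda>r. v r + \<kappa>/2 * (r - r1))"
    have "\<psi> b \<le> \<psi> r1"
    proof (rule DERIV_nonpos_imp_decreasing_open[OF r1b])
      fix x assume x: "r1 < x" "x < b"
      have d: "(v has_real_derivative w x) (at x)" using der x r01 by auto
      have "(\<psi> has_real_derivative (w x + \<kappa>/2)) (at x)"
        unfolding \<psi>_def by (auto intro!: derivative_eq_intros d)
      moreover have "w x + \<kappa>/2 \<le> 0" using wneg[of x] x by auto
      ultimately show "\<exists>y. (\<psi> has_real_derivative y) (at x) \<and> y \<le> 0" by blast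
    next
      show "continuous_on {r1..b} \<psi>" unfolding \<psi>_def
        using continuous_on_subset[OF cont, of "{r1..b}"] r01 by (auto intro!: continuous_intros)
    qed
    then have "\<kappa>/2 * (b - r1) \<le> \<theta>*M" using vb vr1eq by (simp add: \<psi>_def)
    moreover have "\<theta>*M \<le> M" using th M by simp
    ultimately have "\<kappa> * (b - r1) \<le> 2*M" by simp
    then show ?thesis using ka by (simp add: field_simps)
  qed
  show ?thesis using ph1 ph2 by simp
qed




definition th0c :: "real \<Rightarrow> nat \<Rightarrow> real" where
  "th0c p n = (1/(4*4^n)) powr (1/p)"
definition eps0 :: "real \<Rightarrow> nat \<Rightarrow> real" where
  "eps0 p n = min (th0c p n powr (p-2)/2) (1/(4*p*4^n))"
definition a0c :: "real \<Rightarrow> nat \<Rightarrow> real" where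
  "a0c p n = th0c p n powr (p-1)/2/2^n"
definition b0c :: "real \<Rightarrow> nat \<Rightarrow> real" where
  "b0c p n = 1/sqrt(p*4^n)"
definition Cst :: "real \<Rightarrow> nat \<Rightarrow> real" where
  "Cst p n = 2*(sqrt(2/a0c p n) + 2/b0c p n)"

lemma eps0_pos: "2 < p \<Longrightarrow> 0 < eps0 p n"
  unfolding eps0_def th0c_def by simp

locale rode =
  fixes v v1 v2 :: "real \<Rightarrow> real" and n :: nat and p lam r0 :: real
  assumes n1: "1 \<le> n" and p2: "2 < p" and lam: "0 < lam"
  and cont: "continuous_on {1..2} v" and v1z: "v 1 = 0" and v2z: "v 2 = 0"
  and pos: "\<And>r. 1 < r \<Longrightarrow> r < 2 \<Longrightarrow> 0 < v r"
  and d1: "\<And>r. 1 < r \<Longrightarrow> r < 2 \<Longrightarrow> (v has_real_derivative v1 r) (at r)"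
  and d2: "\<And>r. 1 < r \<Longrightarrow> r < 2 \<Longrightarrow> (v1 has_real_derivative v2 r) (at r)"
  and eq: "\<And>r. 1 < r \<Longrightarrow> r < 2 \<Longrightarrow> v2 r + n * v1 r / r = lam * v r - v r powr (p-1)"
  and r0: "1 < r0" "r0 < 2" and vmax: "\<And>r. 1 \<le> r \<Longrightarrow> r \<le> 2 \<Longrightarrow> v r \<le> v r0"
begin

lemma Mpos: "0 < v r0" using pos r0 by auto

lemma v1r0: "v1 r0 = 0"
proof (rule DERIV_local_max[OF d1[OF r0]])
  show "0 < min (r0 - 1) (2 - r0)" using r0 by auto
  show "\<forall>y. \<bar>r0 - y\<bar> < min (r0 - 1) (2 - r0) \<longrightarrow> v y \<le> v r0"
  proof (intro allI impI)
    fix y assume "\<bar>r0 - y\<bar> < min (r0 - 1) (2 - r0)"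
    then have "1 \<le> y" "y \<le> 2" unfolding abs_less_iff by linarith+
    then show "v y \<le> v r0" by (rule vmax)
  qed
qed

lemma powr_split: "0 < y \<Longrightarrow> y powr (p-1) = y * y powr (p-2)"
proof -
  assume y: "0 < y"
  have "y powr (p-1) = y powr (1 + (p-2))" by simp
  also have "\<dots> = y powr 1 * y powr (p-2)" by (rule powr_add)
  finally show ?thesis using y by simp
qed

lemma upper: "lam \<le> v r0 powr (p-2)"
proof (rule ccontr)
  assume "\<not> ?thesis"
  then have "0 < v r0 * (lam - v r0 powr (p-2))" using Mpos by simp
  then have "0 < v2 r0" using eq[OF r0] v1r0 powr_split[OF Mpos]
    by (simp add: algebra_simps)
  from DERIV_pos_inc_right[OF d2[OF r0] this]
  obtain d where d: "0 < d" "\<And>h. 0 < h \<Longrightarrow> h < d \<Longrightarrow> v1 r0 < v1 (r0 + h)" by blast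
  obtain m where m1: "m \<le> d" "m \<le> 2 - r0" "0 < m" using d(1) r0 by (intro that[of "min d (2 - r0)"]) auto
  define h where "h = m / 2"
  have h1: "0 < h" using m1 unfolding h_def by linarith
  have h2: "h < d" using m1 unfolding h_def by linarith
  have h3: "r0 + h < 2" using m1 unfolding h_def by linarith
  note h = h1 h2 h3
  obtain z where z: "r0 < z" "z < r0 + h" "v (r0 + h) - v r0 = (r0 + h - r0) * v1 z"
    using MVT2[of r0 "r0 + h" v v1] h d1 r0 by force
  have "v1 r0 < v1 z" using d(2)[of "z - r0"] z h by auto
  then have "0 < h * v1 z" using h1 v1r0 by simp
  then have "v r0 < v (r0 + h)" using z(3) by simp
  then show False using vmax[of "r0 + h"] h r0 by auto
qed


lemma vle: "1 \<le> s \<Longrightarrow> s \<le> 2 \<Longrightarrow> v s \<le> v r0" by (rule vmax)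

definition Bf :: "real \<Rightarrow> real" where
  "Bf s = (v1 s)^2/2 + v s powr p / p - lam * (v s)^2/2"

lemma Bder: assumes s: "1 < s" "s < 2"
  shows "(Bf has_real_derivative (- (n * (v1 s)^2 / s))) (at s)"
proof -
  have vp: "0 < v s" using pos s by auto
  have D: "(Bf has_real_derivative
     (v1 s * v2 s + v s powr (p-1) * v1 s - lam * v s * v1 s)) (at s)"
    unfolding Bf_def
    using d1[OF s] d2[OF s] vp p2
    by (auto intro!: derivative_eq_intros simp: field_simps)
  have "v1 s * v2 s + v s powr (p-1) * v1 s - lam * v s * v1 s = v1 s * (v2 s + v s powr (p-1) - lam * v s)"
    by (simp add: algebra_simps)
  also have "\<dots> = v1 s * (- (n * v1 s / s))"
  proof -
    have e: "v2 s = lam * v s - v s powr (p-1) - n * v1 s / s" using eq[OF s] by linarith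
    show ?thesis unfolding e by simp
  qed
  also have "\<dots> = - (n * (v1 s)^2 / s)" by (simp add: power2_eq_square)
  finally show ?thesis using D by simp
qed


definition gf :: "real \<Rightarrow> real" where "gf s = s^n * v1 s"

lemma gder: assumes s: "1 < s" "s < 2"
  shows "(gf has_real_derivative s^n * (lam * v s - v s powr (p-1))) (at s)"
proof -
  have D: "(gf has_real_derivative (real n * s^(n - Suc 0) * v1 s + v2 s * s^n)) (at s)"
    unfolding gf_def by (rule DERIV_mult[OF DERIV_pow d2[OF s]])
  obtain m where m: "n = Suc m" using n1 by (cases n) auto
  have e: "lam * v s - v s powr (p-1) = v2 s + n * v1 s / s" using eq[OF s] by linarith
  have "real n * s^(n - Suc 0) * v1 s + v2 s * s^n = s^n * (lam * v s - v s powr (p-1))"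
    unfolding e m using s by (simp add: field_simps)
  then show ?thesis using D by simp
qed

lemma gcont: "1 < x \<Longrightarrow> y < 2 \<Longrightarrow> continuous_on {x..y} gf"
  by (intro continuous_at_imp_continuous_on ballI DERIV_isCont[OF gder]) auto

lemma v1cont: "1 < s \<Longrightarrow> s < 2 \<Longrightarrow> isCont v1 s"
  by (rule DERIV_isCont[OF d2])

definition cc :: "real \<Rightarrow> real" where "cc \<theta> = \<theta> powr (p-1)/2 * v r0 * v r0 powr (p-2)"

lemma cc_pos: "0 < \<theta> \<Longrightarrow> 0 < cc \<theta>" using Mpos by (simp add: cc_def)

context
  fixes \<theta> :: real assumes th0: "0 < \<theta>" and lsm: "lam \<le> \<theta> powr (p-2) * v r0 powr (p-2) / 2"
begin

lemma F1: assumes s: "1 < s" "s < 2" and vs: "\<theta> * v r0 \<le> v s"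
  shows "lam * v s - v s powr (p-1) \<le> - cc \<theta>"
proof -
  define A where "A = \<theta> powr (p-2) * v r0 powr (p-2)"
  have A0: "0 \<le> A" unfolding A_def by simp
  have vp: "0 < v s" using pos s by auto
  have "A = (\<theta> * v r0) powr (p-2)" unfolding A_def using th0 Mpos by (simp add: powr_mult)
  also have "\<dots> \<le> v s powr (p-2)" using vs th0 Mpos p2 by (intro powr_mono2) auto
  finally have Av: "A \<le> v s powr (p-2)" .
  have "v s * A \<le> v s * v s powr (p-2)" using Av vp by (intro mult_left_mono) auto
  then have "v s * A \<le> v s powr (p-1)" using powr_split[OF vp] by simp
  moreover have "lam * v s \<le> A/2 * v s" using lsm vp unfolding A_def by (intro mult_right_mono) auto
  ultimately have "lam * v s - v s powr (p-1) \<le> - (A/2 * v s)" by (simp add: algebra_simps)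
  also have "\<dots> \<le> - (A/2 * (\<theta> * v r0))" using vs A0 by (simp add: mult_left_mono)
  also have "\<dots> = - cc \<theta>" unfolding cc_def A_def using powr_split[OF th0] by (simp add: algebra_simps)
  finally show ?thesis .
qed

lemma gdrop: assumes xy: "1 < x" "x \<le> y" "y < 2" and V: "\<forall>s\<in>{x..y}. \<theta> * v r0 \<le> v s"
  shows "gf y + cc \<theta> * y \<le> gf x + cc \<theta> * x"
proof (rule DERIV_nonpos_imp_decreasing_open[OF xy(2)])
  fix s assume s: "x < s" "s < y"
  have s2: "1 < s" "s < 2" using s xy by auto
  have D: "((\<lambda>s. gf s + cc \<theta> * s) has_real_derivative (s^n * (lam * v s - v s powr (p-1)) + cc \<theta>)) (at s)"
    by (rule derivative_eq_intros gder[OF s2] refl | simp)+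
  define Z where "Z = lam * v s - v s powr (p-1)"
  have X: "Z \<le> - cc \<theta>" using F1[OF s2] V s unfolding Z_def by auto
  have "1 \<le> s^n" using s2 by simp
  moreover have "Z \<le> 0" using X cc_pos[OF th0] by linarith
  ultimately have "s^n * Z \<le> 1 * Z"
    by (intro mult_right_mono_neg) auto
  then have "s^n * Z + cc \<theta> \<le> 0" using X by linarith
  then have "s^n * (lam * v s - v s powr (p-1)) + cc \<theta> \<le> 0" unfolding Z_def .
  then show "\<exists>y. ((\<lambda>s. gf s + cc \<theta> * s) has_real_derivative y) (at s) \<and> y \<le> 0" using D by blast
next
  show "continuous_on {x..y} (\<lambda>s. gf s + cc \<theta> * s)"
    using gcont[of x y] xy by (auto intro!: continuous_intros)
qed


lemma P1R: assumes r: "r0 \<le> r" "r < 2" and V: "\<forall>s\<in>{r0..r}. \<theta> * v r0 \<le> v s"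
  shows "v1 r \<le> - (cc \<theta> / 2^n) * (r - r0)"
proof -
  have "gf r + cc \<theta> * r \<le> gf r0 + cc \<theta> * r0" using gdrop[OF r0(1) r(1) r(2) V] .
  moreover have "gf r0 = 0" unfolding gf_def v1r0 by simp
  ultimately have G0: "gf r \<le> - (cc \<theta> * (r - r0))" by (simp add: algebra_simps)
  then have G: "r^n * v1 r \<le> - (cc \<theta> * (r - r0))" unfolding gf_def .
  have Y: "0 \<le> cc \<theta> * (r - r0)" using cc_pos[OF th0] r by simp
  have rp: "0 < r^n" using r r0 by simp
  have "v1 r \<le> 0"
  proof (rule ccontr)
    assume "\<not> ?thesis"
    then have "0 < r^n * v1 r" using rp by simp
    then show False using G Y by linarith
  qed
  moreover have "r^n \<le> 2^n" using r r0 by (intro power_mono) auto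
  ultimately have "2^n * v1 r \<le> r^n * v1 r" by (intro mult_right_mono_neg) auto
  then have "2^n * v1 r \<le> - (cc \<theta> * (r - r0))" using G by linarith
  then show ?thesis by (simp add: field_simps)
qed

lemma P1L: assumes s: "r0 \<le> s" "s < 2*r0 - 1" and V: "\<forall>t\<in>{r0..s}. \<theta> * v r0 \<le> v (2*r0 - t)"
  shows "- v1 (2*r0 - s) \<le> - (cc \<theta> / 2^n) * (s - r0)"
proof -
  define t0 where "t0 = 2*r0 - s"
  have t0: "1 < t0" "t0 \<le> r0" using s unfolding t0_def by auto
  have V': "\<forall>x\<in>{t0..r0}. \<theta> * v r0 \<le> v x"
  proof
    fix x assume "x \<in> {t0..r0}"
    then have "2*r0 - x \<in> {r0..s}" unfolding t0_def by auto
    from bspec[OF V this] show "\<theta> * v r0 \<le> v x" by simp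
  qed
  have "gf r0 + cc \<theta> * r0 \<le> gf t0 + cc \<theta> * t0" using gdrop[OF t0(1) t0(2) r0(2) V'] .
  moreover have "gf r0 = 0" unfolding gf_def v1r0 by simp
  ultimately have G0: "cc \<theta> * (r0 - t0) \<le> gf t0" by (simp add: algebra_simps)
  then have G: "cc \<theta> * (r0 - t0) \<le> t0^n * v1 t0" unfolding gf_def .
  have Y: "0 \<le> cc \<theta> * (r0 - t0)" using cc_pos[OF th0] t0 by simp
  have rp: "0 < t0^n" using t0 by simp
  have "0 \<le> v1 t0"
  proof (rule ccontr)
    assume "\<not> ?thesis"
    then have "t0^n * v1 t0 < 0" using rp by (simp add: mult_pos_neg)
    then show False using G Y by linarith
  qed
  moreover have "t0^n \<le> 2^n" using t0 r0 by (intro power_mono) auto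
  ultimately have "t0^n * v1 t0 \<le> 2^n * v1 t0" by (intro mult_right_mono) auto
  then have "cc \<theta> * (r0 - t0) \<le> 2^n * v1 t0" using G by linarith
  then have "cc \<theta> / 2^n * (r0 - t0) \<le> v1 t0" by (simp add: field_simps)
  moreover have "r0 - t0 = s - r0" unfolding t0_def by simp
  ultimately show ?thesis unfolding t0_def by simp
qed

end

lemma powr_split2: "0 < y \<Longrightarrow> y powr p = y^2 * y powr (p-2)"
proof -
  assume y: "0 < y"
  have "y powr p = y powr (2 + (p-2))" by simp
  also have "\<dots> = y powr 2 * y powr (p-2)" by (rule powr_add)
  finally show ?thesis using y by (simp add: powr_numeral)
qed


lemma Bcont: "1 < x \<Longrightarrow> y < 2 \<Longrightarrow> continuous_on {x..y} Bf"
  by (intro continuous_at_imp_continuous_on ballI DERIV_isCont[OF Bder]) auto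

lemma Br0: "Bf r0 = v r0 powr p / p - lam * (v r0)^2/2"
  unfolding Bf_def v1r0 by simp

context
  fixes \<theta> :: real assumes th0: "0 < \<theta>" and thp: "\<theta> powr p \<le> 1/(4*4^n)"
    and lsm2: "lam \<le> v r0 powr (p-2) / (4*p*4^n)"
begin

lemma vpow_small: assumes s: "1 < s" "s < 2" and vs: "v s \<le> \<theta> * v r0"
  shows "v s powr p \<le> v r0 powr p / (4*4^n)"
proof -
  have "v s powr p \<le> (\<theta> * v r0) powr p" using pos[OF s] vs p2 by (intro powr_mono2) auto
  also have "\<dots> = \<theta> powr p * v r0 powr p" using th0 Mpos by (simp add: powr_mult)
  also have "\<dots> \<le> 1/(4*4^n) * v r0 powr p" using thp by (intro mult_right_mono) auto
  finally show ?thesis by simp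
qed

lemma lamM: "lam * (v r0)^2 \<le> v r0 powr p / (4*p*4^n)"
proof -
  have "lam * (v r0)^2 \<le> v r0 powr (p-2) / (4*p*4^n) * (v r0)^2" using lsm2 by (intro mult_right_mono) auto
  also have "\<dots> = v r0 powr p / (4*p*4^n)" using powr_split2[OF Mpos] by simp
  finally show ?thesis .
qed

lemma alg: fixes X Mp vp L W :: real
  assumes "0 < p" "1 \<le> W" "0 \<le> Mp" "Mp/(p*W) - vp/p - L/2 \<le> X" "vp \<le> Mp/(4*W)" "L \<le> Mp/(4*p*W)"
  shows "Mp/(p*W) \<le> 2*X"
proof -
  define A where "A = Mp/(p*W)"
  have "vp/p \<le> Mp/(4*W)/p" by (rule divide_right_mono) (use assms in auto)
  also have "\<dots> = A/4" unfolding A_def by simp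
  finally have 1: "vp/p \<le> A/4" .
  have 2: "L \<le> A/4" using assms(6) unfolding A_def by (simp add: mult.commute mult.left_commute)
  have "0 \<le> A" unfolding A_def using assms by simp
  then show ?thesis using 1 2 assms(4) unfolding A_def[symmetric] by linarith
qed

lemma P2R: assumes r: "r0 \<le> r" "r < 2" and vs: "v r \<le> \<theta> * v r0"
  shows "(v r0)^2 * v r0 powr (p-2) / (p*4^n) \<le> (v1 r)^2"
proof -
  define \<Phi> where "\<Phi> = (\<lambda>s. s^(2*n) * (Bf s + lam * (v r0)^2/2))"
  have "\<Phi> r0 \<le> \<Phi> r"
  proof (rule DERIV_nonneg_imp_increasing_open[OF r(1)])
    fix s assume s: "r0 < s" "s < r"
    have s2: "1 < s" "s < 2" using s r r0 by auto
    have D: "(\<Phi> has_real_derivative (real (2*n) * s^(2*n - Suc 0) * (Bf s + lam * (v r0)^2/2)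
        + (-(n * (v1 s)^2 / s) + 0) * s^(2*n))) (at s)"
      unfolding \<Phi>_def by (intro DERIV_mult DERIV_pow DERIV_add Bder[OF s2] DERIV_const)
    obtain m where m: "2*n = Suc m" using n1 by (cases "2*n") auto
    have e: "real (2*n) * s^(2*n - Suc 0) * (Bf s + lam * (v r0)^2/2)
        + (-(n * (v1 s)^2 / s) + 0) * s^(2*n) = s^m * (2*n) * (v s powr p / p + lam * ((v r0)^2 - (v s)^2)/2)"
    proof -
      have sm1: "s^(2*n - Suc 0) = s^m" using m by simp
      have sm2: "s^(2*n) = s * s^m" using m by (metis power_Suc)
      show ?thesis unfolding sm1 sm2 Bf_def using s2 by (simp add: field_simps)
    qed
    have "(v s)^2 \<le> (v r0)^2" using pos[OF s2] vle[of s] s2 by (intro power_mono) auto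
    then have "0 \<le> s^m * (2*n) * (v s powr p / p + lam * ((v r0)^2 - (v s)^2)/2)"
      using s2 lam p2 by (intro mult_nonneg_nonneg add_nonneg_nonneg divide_nonneg_nonneg) auto
    then show "\<exists>y. (\<Phi> has_real_derivative y) (at s) \<and> 0 \<le> y" using D e by auto
  next
    have "continuous_on {r0..r} Bf" using Bcont r r0 by auto
    then show "continuous_on {r0..r} \<Phi>" unfolding \<Phi>_def by (auto intro!: continuous_intros)
  qed
  moreover have "\<Phi> r0 = r0^(2*n) * (v r0 powr p / p)" unfolding \<Phi>_def Br0 by simp
  moreover have "1 * (v r0 powr p / p) \<le> r0^(2*n) * (v r0 powr p / p)"
    using r0 p2 by (intro mult_right_mono) auto
  ultimately have F: "v r0 powr p / p \<le> r^(2*n) * (Bf r + lam * (v r0)^2/2)" unfolding \<Phi>_def by simp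
  define X' where "X' = Bf r + lam * (v r0)^2/2"
  have rp: "0 < r^(2*n)" using r r0 by simp
  have Mp: "0 < v r0 powr p / p" using Mpos p2 by simp
  have "0 < X'" using F Mp rp unfolding X'_def by (metis less_le_trans zero_less_mult_pos)
  moreover have "r^(2*n) \<le> 4^n"
  proof -
    have "r^(2*n) = (r^2)^n" by (simp add: power_mult)
    also have "\<dots> \<le> 4^n"
    proof (rule power_mono)
      have "r * r \<le> 2 * 2" using r r0 by (intro mult_mono) auto
      then show "r^2 \<le> 4" by (simp add: power2_eq_square)
    qed simp
    finally show ?thesis .
  qed
  ultimately have "r^(2*n) * X' \<le> 4^n * X'" by (intro mult_right_mono) auto
  then have "v r0 powr p / p \<le> 4^n * X'" using F unfolding X'_def by linarith
  then have X1: "v r0 powr p / (p * 4^n) \<le> X'" using p2 by (simp add: field_simps)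
  have "v r0 powr p / (p*4^n) - v r powr p / p - lam * (v r0)^2 / 2 \<le> (v1 r)^2/2"
  proof -
    have "0 \<le> lam * (v r)^2" using lam by simp
    moreover note X1[unfolded X'_def Bf_def]
    ultimately show ?thesis by linarith
  qed
  from alg[OF _ _ _ this vpow_small lamM] have "v r0 powr p / (p*4^n) \<le> 2 * ((v1 r)^2/2)"
    using p2 r r0 vs by simp
  then show ?thesis using powr_split2[OF Mpos] by simp
qed

lemma P2L: assumes t: "1 < t" "t \<le> r0" and vs: "v t \<le> \<theta> * v r0"
  shows "(v r0)^2 * v r0 powr (p-2) / (p*4^n) \<le> (v1 t)^2"
proof -
  have "Bf r0 \<le> Bf t"
  proof (rule DERIV_nonpos_imp_decreasing_open[OF t(2)])
    fix s assume s: "t < s" "s < r0"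
    have s2: "1 < s" "s < 2" using s t r0 by auto
    have "0 \<le> n * (v1 s)^2 / s" using s2 by simp
    then show "\<exists>y. (Bf has_real_derivative y) (at s) \<and> y \<le> 0" using Bder[OF s2] by auto
  next
    show "continuous_on {t..r0} Bf" using Bcont t r0 by auto
  qed
  then have F: "v r0 powr p / p - lam * (v r0)^2/2 \<le> Bf t" unfolding Br0 .
  have W: "v r0 powr p / (p*4^n) \<le> v r0 powr p / p"
    using Mpos p2 by (intro divide_left_mono) auto
  have "v r0 powr p / (p*4^n) - v t powr p / p - lam * (v r0)^2 / 2 \<le> (v1 t)^2/2"
  proof -
    have "0 \<le> lam * (v t)^2" using lam by simp
    moreover note F[unfolded Bf_def]
    ultimately show ?thesis using W by linarith
  qed
  from alg[OF _ _ _ this vpow_small lamM] have "v r0 powr p / (p*4^n) \<le> 2 * ((v1 t)^2/2)"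
    using p2 t r0 vs by simp
  then show ?thesis using powr_split2[OF Mpos] by simp
qed

end


lemma lower: assumes small: "lam \<le> eps0 p n * v r0 powr (p-2)"
  shows "v r0 powr (p-2) \<le> (Cst p n)^2"
proof -
  define \<theta> where "\<theta> = th0c p n"
  define M where "M = v r0"
  define Q where "Q = v r0 powr (p-2)"
  have M0: "0 < M" using Mpos M_def by simp
  have Q0: "0 < Q" unfolding Q_def using Mpos by simp
  have W1: "(1::real) \<le> 4^n" by simp
  have th0: "0 < \<theta>" unfolding \<theta>_def th0c_def by simp
  have th1: "\<theta> < 1"
  proof -
    have "(1::real) < 4*4^n" using W1 by linarith
    then have "(1/(4*4^n)::real) < 1" by simp
    then have "(1/(4*4^n)::real) powr (1/p) < 1 powr (1/p)" using p2 by (intro powr_less_mono2) auto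
    then show ?thesis unfolding \<theta>_def th0c_def by simp
  qed
  have thp: "\<theta> powr p \<le> 1/(4*4^n)"
    unfolding \<theta>_def th0c_def powr_powr using p2 by simp
  have e1: "eps0 p n \<le> \<theta> powr (p-2)/2" and e2: "eps0 p n \<le> 1/(4*p*4^n)"
    unfolding eps0_def \<theta>_def by auto
  have lsm: "lam \<le> \<theta> powr (p-2) * v r0 powr (p-2) / 2"
    using small mult_right_mono[OF e1, of "v r0 powr (p-2)"] by simp
  have lsm2: "lam \<le> v r0 powr (p-2) / (4*p*4^n)"
    using small mult_right_mono[OF e2, of "v r0 powr (p-2)"] by simp
  define \<alpha> where "\<alpha> = cc \<theta> / 2^n"
  define \<kappa> where "\<kappa> = b0c p n * M * sqrt Q"
  have al: "0 < \<alpha>" unfolding \<alpha>_def using cc_pos[OF th0] by simp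
  have b0: "0 < b0c p n" unfolding b0c_def using p2 by simp
  have ka: "0 < \<kappa>" unfolding \<kappa>_def using b0 M0 Q0 by simp
  have ka2: "\<kappa>^2 = M^2 * Q / (p*4^n)"
    unfolding \<kappa>_def b0c_def using p2 Q0 by (simp add: power_mult_distrib power_divide)
  have R: "2 - r0 \<le> sqrt (2*M/\<alpha>) + 2*M/\<kappa>"
  proof (rule escape[OF r0(2) M0 th0 th1 al ka])
    show "continuous_on {r0..2} v" by (rule continuous_on_subset[OF cont]) (use r0 in auto)
    show "v 2 = 0" by (rule v2z)
    show "\<forall>r\<in>{r0..<2}. 0 < v r" using pos r0 by auto
    show "v r0 = M" by (simp add: M_def)
    show "\<forall>r\<in>{r0..<2}. (v has_real_derivative v1 r) (at r)" using d1 r0 by auto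
    show "\<forall>r\<in>{r0..<2}. isCont v1 r" using v1cont r0 by auto
    show "\<forall>r\<in>{r0..<2}. (\<forall>s\<in>{r0..r}. \<theta> * M \<le> v s) \<longrightarrow> v1 r \<le> - \<alpha> * (r - r0)"
      unfolding \<alpha>_def M_def using P1R[OF th0 lsm] by auto
    show "\<forall>r\<in>{r0..<2}. v r \<le> \<theta> * M \<longrightarrow> \<kappa>^2 \<le> (v1 r)^2"
      unfolding ka2 M_def Q_def using P2R[OF th0 thp lsm2] by auto
  qed
  have L: "(2*r0 - 1) - r0 \<le> sqrt (2*M/\<alpha>) + 2*M/\<kappa>"
  proof (rule escape[of r0 "2*r0-1" M \<theta> \<alpha> \<kappa> "\<lambda>s. v (2*r0 - s)" "\<lambda>s. - v1 (2*r0 - s)"])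
    show "r0 < 2*r0 - 1" using r0 by simp
    show "0 < M" "0 < \<theta>" "\<theta> < 1" "0 < \<alpha>" "0 < \<kappa>" using M0 th0 th1 al ka by auto
    show "continuous_on {r0..2*r0-1} (\<lambda>s. v (2*r0 - s))"
      by (rule continuous_on_compose2[OF cont]) (use r0 in \<open>auto intro!: continuous_intros\<close>)
    show "v (2*r0 - (2*r0-1)) = 0" using v1z by simp
    show "\<forall>r\<in>{r0..<2*r0-1}. 0 < v (2*r0 - r)" using pos r0 by auto
    show "v (2*r0 - r0) = M" by (simp add: M_def)
    show "\<forall>r\<in>{r0..<2*r0-1}. ((\<lambda>s. v (2*r0 - s)) has_real_derivative - v1 (2*r0 - r)) (at r)"
    proof
      fix r assume r: "r \<in> {r0..<2*r0-1}"
      then have bb: "1 < 2*r0 - r" "2*r0 - r < 2" using r0 by auto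
      have i: "((\<lambda>s. 2*r0 - s) has_real_derivative -1) (at r)" by (auto intro!: derivative_eq_intros)
      from DERIV_chain'[OF i d1[OF bb]] show "((\<lambda>s. v (2*r0 - s)) has_real_derivative - v1 (2*r0 - r)) (at r)"
        by simp
    qed
    show "\<forall>r\<in>{r0..<2*r0-1}. isCont (\<lambda>s. - v1 (2*r0 - s)) r"
    proof
      fix r assume r: "r \<in> {r0..<2*r0-1}"
      then have bb: "1 < 2*r0 - r" "2*r0 - r < 2" using r0 by auto
      have c1: "isCont (\<lambda>s. 2*r0 - s) r" by (intro continuous_intros)
      have "isCont (\<lambda>s. v1 ((\<lambda>s. 2*r0 - s) s)) r" by (rule isCont_o2[OF c1]) (simp add: v1cont[OF bb])
      from isCont_minus[OF this] show "isCont (\<lambda>s. - v1 (2*r0 - s)) r" by simp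
    qed
    show "\<forall>r\<in>{r0..<2*r0-1}. (\<forall>s\<in>{r0..r}. \<theta> * M \<le> v (2*r0 - s)) \<longrightarrow> - v1 (2*r0 - r) \<le> - \<alpha> * (r - r0)"
      unfolding \<alpha>_def M_def using P1L[OF th0 lsm] by auto
    show "\<forall>r\<in>{r0..<2*r0-1}. v (2*r0 - r) \<le> \<theta> * M \<longrightarrow> \<kappa>^2 \<le> (- v1 (2*r0 - r))^2"
      unfolding ka2 M_def Q_def using P2L[OF th0 thp lsm2] by auto
  qed
  have sum: "1 \<le> 2 * (sqrt (2*M/\<alpha>) + 2*M/\<kappa>)" using R L by simp
  define \<mu> where "\<mu> = sqrt Q"
  have mu: "0 < \<mu>" unfolding \<mu>_def using Q0 by simp
  have a0: "0 < a0c p n" unfolding a0c_def th0c_def by simp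
  have "\<alpha> = a0c p n * M * Q"
    unfolding \<alpha>_def cc_def a0c_def \<theta>_def M_def Q_def by simp
  then have "2*M/\<alpha> = (2/a0c p n) / \<mu>^2" unfolding \<mu>_def using M0 Q0 by simp
  then have s1: "sqrt (2*M/\<alpha>) = sqrt (2/a0c p n) / \<mu>" using mu by (simp add: real_sqrt_divide real_sqrt_mult)
  have s2: "2*M/\<kappa> = (2/b0c p n) / \<mu>" unfolding \<kappa>_def \<mu>_def using M0 by simp
  have "1 \<le> Cst p n / \<mu>" using sum unfolding s1 s2 Cst_def by (simp add: add_divide_distrib)
  then have "\<mu> \<le> Cst p n" using mu by (simp add: field_simps)
  then have "\<mu>^2 \<le> (Cst p n)^2" using mu by (intro power_mono) auto
  then show ?thesis unfolding \<mu>_def Q_def using Mpos by simp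
qed

end



lemma line_der: "((\<lambda>t. x + t *\<^sub>R i) has_derivative (\<lambda>h. h *\<^sub>R i)) (at t)"
  by (auto intro!: derivative_eq_intros)

lemma dir_der:
  fixes f :: "'a::euclidean_space \<Rightarrow> real"
  assumes "(f has_derivative blinfun_apply D) (at (x + t *\<^sub>R i))"
  shows "((\<lambda>t. f (x + t *\<^sub>R i)) has_real_derivative blinfun_apply D i) (at t)"
proof -
  have "((\<lambda>t. f (x + t *\<^sub>R i)) has_derivative (\<lambda>h. blinfun_apply D (h *\<^sub>R i))) (at t)"
    by (rule has_derivative_compose[OF line_der assms])
  moreover have "(\<lambda>h. blinfun_apply D (h *\<^sub>R i)) = (*) (blinfun_apply D i)"
    by (auto simp: blinfun.scaleR_right)
  ultimately show ?thesis unfolding has_field_derivative_def by simp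
qed

lemma dir_der2:
  fixes g :: "'a::euclidean_space \<Rightarrow> 'a \<Rightarrow>\<^sub>L real"
  assumes "(g has_derivative blinfun_apply D) (at (x + t *\<^sub>R i))"
  shows "((\<lambda>t. blinfun_apply (g (x + t *\<^sub>R i)) j) has_real_derivative blinfun_apply (blinfun_apply D i) j) (at t)"
proof -
  have "((\<lambda>t. g (x + t *\<^sub>R i)) has_derivative (\<lambda>h. blinfun_apply D (h *\<^sub>R i))) (at t)"
    by (rule has_derivative_compose[OF line_der assms])
  then have "((\<lambda>t. blinfun_apply (g (x + t *\<^sub>R i)) j) has_derivative (\<lambda>h. blinfun_apply (blinfun_apply D (h *\<^sub>R i)) j)) (at t)"
    by (rule bounded_linear.has_derivative[OF blinfun.bounded_linear_left])
  moreover have "(\<lambda>h. blinfun_apply (blinfun_apply D (h *\<^sub>R i)) j) = (*) (blinfun_apply (blinfun_apply D i) j)"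
    by (auto simp: blinfun.scaleR_right blinfun.scaleR_left)
  ultimately show ?thesis unfolding has_field_derivative_def by simp
qed

lemma open_annulus: "open (annulus :: 'a::euclidean_space set)"
  unfolding annulus_def by (intro open_Collect_conj open_Collect_less continuous_intros)


lemma norm_sb: "b \<in> Basis \<Longrightarrow> norm (s *\<^sub>R b) = \<bar>s\<bar>"
  by simp

lemma norm_sbti: assumes "b \<in> Basis" "i \<in> Basis" "i \<noteq> b"
  shows "norm (s *\<^sub>R b + t *\<^sub>R i) = sqrt (s^2 + t^2)"
proof -
  have "inner b i = 0" "inner i b = 0" using assms by (auto simp: inner_Basis)
  then have "inner (s *\<^sub>R b + t *\<^sub>R i) (s *\<^sub>R b + t *\<^sub>R i) = s^2 + t^2"
    using assms by (simp add: inner_add_left inner_add_right power2_eq_square)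
  then show ?thesis by (simp add: norm_eq_sqrt_inner)
qed

locale radsol =
  fixes u :: "'a::euclidean_space \<Rightarrow> real" and f' :: "'a \<Rightarrow> 'a \<Rightarrow>\<^sub>L real"
    and f'' :: "'a \<Rightarrow> 'a \<Rightarrow>\<^sub>L ('a \<Rightarrow>\<^sub>L real)" and p lam :: real and b :: 'a
  assumes dF: "\<And>x. x \<in> annulus \<Longrightarrow> (u has_derivative blinfun_apply (f' x)) (at x)"
    and dF2: "\<And>x. x \<in> annulus \<Longrightarrow> (f' has_derivative blinfun_apply (f'' x)) (at x)"
    and cont: "continuous_on (closure annulus) u"
    and bnd: "\<And>x. norm x = 1 \<or> norm x = 2 \<Longrightarrow> u x = 0"
    and posu: "\<And>x. x \<in> annulus \<Longrightarrow> 0 < u x"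
    and rad: "\<And>x y. norm x = norm y \<Longrightarrow> u x = u y"
    and pde: "\<And>x. x \<in> annulus \<Longrightarrow> - laplacian u x + lam * u x = u x powr (p-1)"
    and b: "b \<in> Basis"
begin

definition v :: "real \<Rightarrow> real" where "v s = u (s *\<^sub>R b)"
definition v1 :: "real \<Rightarrow> real" where "v1 s = blinfun_apply (f' (s *\<^sub>R b)) b"
definition v2 :: "real \<Rightarrow> real" where "v2 s = blinfun_apply (blinfun_apply (f'' (s *\<^sub>R b)) b) b"

lemma sb_ann: "1 < s \<Longrightarrow> s < 2 \<Longrightarrow> s *\<^sub>R b \<in> annulus"
  using b by (simp add: annulus_def)

lemma second_dir: assumes x: "x \<in> annulus"
  shows "deriv (deriv (\<lambda>t. u (x + t *\<^sub>R i))) 0 = blinfun_apply (blinfun_apply (f'' x) i) i"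
proof -
  define S where "S = {t. x + t *\<^sub>R i \<in> annulus}"
  have So: "open S" unfolding S_def
    using open_vimage[OF open_annulus, of "\<lambda>t. x + t *\<^sub>R i"]
    by (simp add: vimage_def continuous_intros)
  have S0: "0 \<in> S" using x by (simp add: S_def)
  have k: "((\<lambda>t. blinfun_apply (f' (x + t *\<^sub>R i)) i) has_real_derivative blinfun_apply (blinfun_apply (f'' x) i) i) (at 0)"
    using dir_der2[of f' "f'' x" x 0 i i] dF2[OF x] by simp
  have eqS: "blinfun_apply (f' (x + t *\<^sub>R i)) i = deriv (\<lambda>t. u (x + t *\<^sub>R i)) t" if "t \<in> S" for t
  proof -
    have "x + t *\<^sub>R i \<in> annulus" using that by (simp add: S_def)
    from dir_der[OF dF[OF this]] show ?thesis by (simp add: DERIV_imp_deriv)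
  qed
  have "(deriv (\<lambda>t. u (x + t *\<^sub>R i)) has_real_derivative blinfun_apply (blinfun_apply (f'' x) i) i) (at 0)"
    by (rule has_field_derivative_transform_within_open[OF k So S0 eqS])
  then show ?thesis by (rule DERIV_imp_deriv)
qed

lemma lap_formula: "x \<in> annulus \<Longrightarrow> laplacian u x = (\<Sum>i\<in>Basis. blinfun_apply (blinfun_apply (f'' x) i) i)"
  unfolding laplacian_def by (simp add: second_dir)

lemma vder: "1 < s \<Longrightarrow> s < 2 \<Longrightarrow> (v has_real_derivative v1 s) (at s)"
  using dir_der[of u "f' (s *\<^sub>R b)" 0 s b] dF[OF sb_ann] unfolding v_def[abs_def] v1_def by simp

lemma v1der: "1 < s \<Longrightarrow> s < 2 \<Longrightarrow> (v1 has_real_derivative v2 s) (at s)"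
  using dir_der2[of f' "f'' (s *\<^sub>R b)" 0 s b b] dF2[OF sb_ann] unfolding v1_def[abs_def] v2_def by simp


lemma v_norm: "x \<in> annulus \<Longrightarrow> u x = v (norm x)"
  unfolding v_def by (rule rad) (use b in simp)

lemma offdiag: assumes s: "1 < s" "s < 2" and i: "i \<in> Basis" "i \<noteq> b"
  shows "blinfun_apply (blinfun_apply (f'' (s *\<^sub>R b)) i) i = v1 s / s"
proof -
  define x where "x = s *\<^sub>R b"
  define g where "g = (\<lambda>t. sqrt (s^2 + t^2))"
  define S where "S = {t. x + t *\<^sub>R i \<in> annulus}"
  have So: "open S" unfolding S_def
    using open_vimage[OF open_annulus, of "\<lambda>t. x + t *\<^sub>R i"]
    by (simp add: vimage_def continuous_intros)
  have x: "x \<in> annulus" unfolding x_def using sb_ann s .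
  have S0: "0 \<in> S" using x by (simp add: S_def)
  have nx: "norm (x + t *\<^sub>R i) = g t" for t unfolding x_def g_def using norm_sbti[OF b i(1) i(2)] .
  have gS: "1 < g t" "g t < 2" if "t \<in> S" for t using that nx[of t] by (auto simp: S_def annulus_def)
  have gpos: "0 < g t" for t unfolding g_def using s by (simp add: add_pos_nonneg)
  have g0: "g 0 = s" unfolding g_def using s by simp
  have gder: "(g has_real_derivative t / g t) (at t)" for t
  proof -
    have "((\<lambda>t. s^2 + t^2) has_real_derivative 2 * t) (at t)" by (auto intro!: derivative_eq_intros)
    from DERIV_chain'[OF this DERIV_real_sqrt[of "s^2 + t^2"]] show ?thesis
      using gpos[of t] unfolding g_def by (simp add: field_simps add_pos_nonneg s)
  qed
  have hv: "u (x + t *\<^sub>R i) = v (g t)" for t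
  proof -
    have "u (x + t *\<^sub>R i) = u (g t *\<^sub>R b)" by (rule rad) (use nx b gpos[of t] in \<open>simp\<close>)
    then show ?thesis by (simp add: v_def)
  qed
  define m where "m = (\<lambda>t. v1 (g t) * (t / g t))"
  have eqS: "m t = blinfun_apply (f' (x + t *\<^sub>R i)) i" if "t \<in> S" for t
  proof -
    have A: "((\<lambda>t. u (x + t *\<^sub>R i)) has_real_derivative blinfun_apply (f' (x + t *\<^sub>R i)) i) (at t)"
      using dir_der[OF dF] that by (simp add: S_def)
    have B: "((\<lambda>t. v (g t)) has_real_derivative v1 (g t) * (t / g t)) (at t)"
      by (rule DERIV_chain'[OF gder vder[OF gS[OF that]]])
    have "(\<lambda>t. u (x + t *\<^sub>R i)) = (\<lambda>t. v (g t))" using hv by auto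
    with A B show ?thesis unfolding m_def using DERIV_unique by metis
  qed
  have mder: "(m has_real_derivative v1 s / s) (at 0)"
  proof -
    have d1: "((\<lambda>t. v1 (g t)) has_real_derivative v2 (g 0) * (0 / g 0)) (at 0)"
      by (rule DERIV_chain'[OF gder v1der]) (use g0 s in auto)
    have d2: "((\<lambda>t. t / g t) has_real_derivative (1 * g 0 - 0 * (0 / g 0)) / (g 0 * g 0)) (at 0)"
      by (rule DERIV_divide[OF DERIV_ident gder]) (use gpos in \<open>simp add: less_imp_neq[symmetric]\<close>)
    have "(m has_real_derivative (v2 (g 0) * (0 / g 0)) * (0 / g 0) + ((1 * g 0 - 0 * (0 / g 0)) / (g 0 * g 0)) * v1 (g 0)) (at 0)"
      unfolding m_def by (rule DERIV_mult[OF d1 d2])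
    then show ?thesis using g0 s by simp
  qed
  have k: "((\<lambda>t. blinfun_apply (f' (x + t *\<^sub>R i)) i) has_real_derivative v1 s / s) (at 0)"
    by (rule has_field_derivative_transform_within_open[OF mder So S0 eqS])
  have k2: "((\<lambda>t. blinfun_apply (f' (x + t *\<^sub>R i)) i) has_real_derivative blinfun_apply (blinfun_apply (f'' x) i) i) (at 0)"
    using dir_der2[of f' "f'' x" x 0 i i] dF2[OF x] by simp
  show ?thesis using DERIV_unique[OF k k2] unfolding x_def by simp
qed


lemma lap_sb: assumes s: "1 < s" "s < 2"
  shows "laplacian u (s *\<^sub>R b) = v2 s + real (DIM('a) - 1) * (v1 s / s)"
proof -
  have "laplacian u (s *\<^sub>R b) = (\<Sum>i\<in>Basis. blinfun_apply (blinfun_apply (f'' (s *\<^sub>R b)) i) i)"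
    by (rule lap_formula[OF sb_ann[OF s]])
  also have "\<dots> = blinfun_apply (blinfun_apply (f'' (s *\<^sub>R b)) b) b
      + (\<Sum>i\<in>Basis - {b}. blinfun_apply (blinfun_apply (f'' (s *\<^sub>R b)) i) i)"
    by (rule sum.remove[OF finite_Basis b])
  also have "(\<Sum>i\<in>Basis - {b}. blinfun_apply (blinfun_apply (f'' (s *\<^sub>R b)) i) i) = (\<Sum>i\<in>Basis - {b}. v1 s / s)"
    by (rule sum.cong) (use offdiag[OF s] in auto)
  also have "\<dots> = real (DIM('a) - 1) * (v1 s / s)" using b by simp
  finally show ?thesis unfolding v2_def by simp
qed

lemma ode: assumes s: "1 < s" "s < 2"
  shows "v2 s + real (DIM('a) - 1) * v1 s / s = lam * v s - v s powr (p-1)"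
  using pde[OF sb_ann[OF s]] lap_sb[OF s] unfolding v_def by simp

lemma vcont: "continuous_on {1..2} v"
proof -
  have "(\<lambda>s. s *\<^sub>R b) ` closure {1<..<2::real} \<subseteq> closure annulus"
  proof (rule image_closure_subset)
    show "continuous_on (closure {1<..<2}) (\<lambda>s. s *\<^sub>R b)" by (intro continuous_intros)
    show "closed (closure annulus)" by simp
    show "(\<lambda>s. s *\<^sub>R b) ` {1<..<2} \<subseteq> closure annulus" using sb_ann closure_subset by fastforce
  qed
  then have "(\<lambda>s. s *\<^sub>R b) ` {1..2::real} \<subseteq> closure annulus" by simp
  then show ?thesis unfolding v_def
    by (intro continuous_on_compose2[OF cont]) (auto intro!: continuous_intros)
qed

lemma v1z: "v 1 = 0" unfolding v_def using b by (intro bnd) simp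
lemma v2z: "v 2 = 0" unfolding v_def using b by (intro bnd) simp
lemma vpos: "1 < s \<Longrightarrow> s < 2 \<Longrightarrow> 0 < v s" unfolding v_def using posu sb_ann by blast

lemma exists_rode: assumes "2 \<le> DIM('a)" "2 < p" "0 < lam"
  shows "\<exists>r0. rode v v1 v2 (DIM('a) - 1) p lam r0 \<and> Linf_norm u = v r0"
proof -
  obtain r0 where r0: "r0 \<in> {1..2}" and mx: "\<forall>y\<in>{1..2}. v y \<le> v r0"
    using continuous_attains_sup[OF compact_Icc _ vcont] by auto
  have "0 < v (3/2)" by (rule vpos) auto
  moreover have "v (3/2) \<le> v r0" using mx by simp
  ultimately have "0 < v r0" by linarith
  then have r0': "1 < r0" "r0 < 2" using r0 v1z v2z by (auto simp: le_less)
  have R: "rode v v1 v2 (DIM('a) - 1) p lam r0"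
  proof
    show "1 \<le> DIM('a) - 1" using assms by simp
  qed (use assms vcont v1z v2z vpos vder v1der ode r0' mx in auto)
  have "Linf_norm u = v r0" unfolding Linf_norm_def
  proof (rule cSup_eq_maximum)
    have "r0 *\<^sub>R b \<in> annulus" using sb_ann r0' by auto
    moreover have "\<bar>u (r0 *\<^sub>R b)\<bar> = v r0" using \<open>0 < v r0\<close> unfolding v_def by simp
    ultimately show "v r0 \<in> (\<lambda>x. \<bar>u x\<bar>) ` annulus" by force
    fix y assume "y \<in> (\<lambda>x. \<bar>u x\<bar>) ` annulus"
    then obtain x where x: "x \<in> annulus" "y = \<bar>u x\<bar>" by auto
    have "y = v (norm x)" using x posu[OF x(1)] v_norm[OF x(1)] by simp
    moreover have "norm x \<in> {1..2}" using x by (auto simp: annulus_def)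
    ultimately show "y \<le> v r0" using mx by simp
  qed
  with R show ?thesis by blast
qed

end



lemma key:
  fixes p lam :: real and u :: "'a::euclidean_space \<Rightarrow> real"
  assumes "DIM('a) \<ge> 2" "2 < p" "0 < lam" "pos_rad_sol p lam u"
  shows "0 < Linf_norm u \<and> lam \<le> Linf_norm u powr (p-2) \<and>
    (lam \<le> eps0 p (DIM('a) - 1) * Linf_norm u powr (p-2) \<longrightarrow> Linf_norm u powr (p-2) \<le> (Cst p (DIM('a) - 1))^2)"
proof -
  obtain f' f'' where F: "\<forall>x\<in>annulus. (u has_derivative blinfun_apply (f' x)) (at x)"
      "\<forall>x\<in>annulus. (f' has_derivative blinfun_apply (f'' x)) (at x)"
    using assms(4) unfolding pos_rad_sol_def C2_on_def by blast
  obtain b :: 'a where b: "b \<in> Basis" using nonempty_Basis by blast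
  have P: "continuous_on (closure annulus) u" "\<forall>x. norm x = 1 \<or> norm x = 2 \<longrightarrow> u x = 0"
    "\<forall>x\<in>annulus. u x > 0" "\<forall>x y. norm x = norm y \<longrightarrow> u x = u y"
    "\<forall>x\<in>annulus. - laplacian u x + lam * u x = u x powr (p - 1)"
    using assms(4) unfolding pos_rad_sol_def by blast+
  have RS: "radsol u f' f'' p lam b" unfolding radsol_def using F P b by blast
  interpret radsol u f' f'' p lam b by (rule RS)
  obtain r0 where R: "rode v v1 v2 (DIM('a) - 1) p lam r0" and L: "Linf_norm u = v r0"
    using exists_rode[OF assms(1-3)] by blast
  have U: "lam \<le> v r0 powr (p-2)" by (rule rode.upper[OF R])
  have Lo: "lam \<le> eps0 p (DIM('a) - 1) * v r0 powr (p-2) \<Longrightarrow> v r0 powr (p-2) \<le> (Cst p (DIM('a) - 1))^2"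
    by (rule rode.lower[OF R])
  have M: "0 < v r0" by (rule rode.Mpos[OF R])
  show ?thesis unfolding L using U Lo M by (intro conjI impI)
qed

theorem lemma2p3:
  fixes p :: real and u :: "real \<Rightarrow> 'a::euclidean_space \<Rightarrow> real"
  assumes "DIM('a) \<ge> 2"
    and "2 < p"
    and "DIM('a) = 2 \<or> p < 2 * real DIM('a) / (real DIM('a) - 2)"
    and "\<forall>lam>0. pos_rad_sol p lam (u lam)"
  shows "0 < Liminf at_top (\<lambda>lam. ereal (lam / Linf_norm (u lam) powr (p - 2))) \<and>
         Limsup at_top (\<lambda>lam. ereal (lam / Linf_norm (u lam) powr (p - 2))) \<le> 1"
proof
  define e where "e = eps0 p (DIM('a) - 1)"
  define C where "C = Cst p (DIM('a) - 1)"
  have e0: "0 < e" unfolding e_def using eps0_pos assms(2) by blast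
  have K: "\<And>lam. 0 < lam \<Longrightarrow> 0 < Linf_norm (u lam) \<and> lam \<le> Linf_norm (u lam) powr (p-2) \<and>
    (lam \<le> e * Linf_norm (u lam) powr (p-2) \<longrightarrow> Linf_norm (u lam) powr (p-2) \<le> C^2)"
  proof -
    fix lam :: real assume lp: "0 < lam"
    have "pos_rad_sol p lam (u lam)" using assms(4) lp by blast
    then show "?thesis lam" unfolding e_def C_def by (rule key[OF assms(1,2) lp])
  qed
  have "eventually (\<lambda>lam. ereal e \<le> ereal (lam / Linf_norm (u lam) powr (p - 2))) at_top"
    unfolding eventually_at_top_linorder
  proof (intro exI[of _ "e * C^2 + 1"] allI impI)
    fix lam :: real assume lam: "e * C^2 + 1 \<le> lam"
    have "0 \<le> e * C^2" using e0 by simp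
    then have lp: "0 < lam" using lam by linarith
    have Q: "0 < Linf_norm (u lam) powr (p-2)" using K[OF lp] by simp
    show "ereal e \<le> ereal (lam / Linf_norm (u lam) powr (p - 2))"
    proof (rule ccontr)
      assume "\<not> ?thesis"
      then have "lam / Linf_norm (u lam) powr (p - 2) < e" by simp
      then have "lam < e * Linf_norm (u lam) powr (p - 2)" using Q by (simp add: field_simps)
      then have "Linf_norm (u lam) powr (p-2) \<le> C^2" using K[OF lp] by simp
      then have "e * Linf_norm (u lam) powr (p-2) \<le> e * C^2" using e0 by simp
      with \<open>lam < e * _\<close> lam show False by simp
    qed
  qed
  then have "ereal e \<le> Liminf at_top (\<lambda>lam. ereal (lam / Linf_norm (u lam) powr (p - 2)))"
    by (rule Liminf_bounded)
  then show "0 < Liminf at_top (\<lambda>lam. ereal (lam / Linf_norm (u lam) powr (p - 2)))"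
    using e0 by (meson ereal_less(2) less_le_trans)
next
  have "eventually (\<lambda>lam. ereal (lam / Linf_norm (u lam) powr (p - 2)) \<le> 1) at_top"
    unfolding eventually_at_top_linorder
  proof (intro exI[of _ 1] allI impI)
    fix lam :: real assume "1 \<le> lam"
    then have lp: "0 < lam" by simp
    have "pos_rad_sol p lam (u lam)" using assms(4) lp by blast
    from key[OF assms(1,2) lp this]
    have "0 < Linf_norm (u lam)" "lam \<le> Linf_norm (u lam) powr (p-2)" by auto
    then show "ereal (lam / Linf_norm (u lam) powr (p - 2)) \<le> 1" by simp
  qed
  then show "Limsup at_top (\<lambda>lam. ereal (lam / Linf_norm (u lam) powr (p - 2))) \<le> 1"
    by (rule Limsup_bounded)
qed


end
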